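(* Let $k\ge 2$ be an integer, $1/2<q<1$. Let $y^*$ be a point with all coordinates strictly positive at which $P$ attains its maximum over $\Delta_k$, and suppose $y^*\neq(1/k,\dots,1/k)$, so that (as shown previously) its coordinates take exactly two values $a<1-q<b$. Then exactly one coordinate of $y^*$ equals $b$ (and the remaining $k-1$ coordinates equal $a$).
   Context: $\Delta_k=\{y\in\mathbb R^k: y_i\ge 0,\ \sum_i y_i=1\}$. For $y\in\Delta_k$, $P(y)=\sum_{i=1}^k y_i^q\prod_{j\ne i}(1-y_j)^q$. *)

theory Defs
  imports Complex_Main
begin

text \<open>Points of R^k are functions nat => real; only the coordinates 0..k-1 matter.\<close>

definition simplex :: "nat \<Rightarrow> (nat \<Rightarrow> real) set" where
  "simplex k = {y. (\<forall>i<k. 0 \<le> y i) \<and> (\<Sum>i<k. y i) = 1}"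

definition P :: "nat \<Rightarrow> real \<Rightarrow> (nat \<Rightarrow> real) \<Rightarrow> real" where
  "P k q y = (\<Sum>i<k. y i powr q * (\<Prod>j\<in>{..<k} - {i}. (1 - y j) powr q))"

end

theory Submission
  imports Defs
begin
definition RR :: "real \<Rightarrow> real \<Rightarrow> real" where "RR q t = t powr q / (1-t) powr q"
definition WW :: "real \<Rightarrow> real \<Rightarrow> real" where "WW q t = q * t powr (q-1) / (1-t) powr q"
definition LL :: "real \<Rightarrow> real \<Rightarrow> real" where "LL q t = (q-1)/t + q/(1-t)"
definition GG :: "real \<Rightarrow> real \<Rightarrow> real \<Rightarrow> real \<Rightarrow> real \<Rightarrow> real" where
  "GG q u v C t = (1-(u+t)) powr q * (1-(v-t)) powr q * (C + RR q (u+t) + RR q (v-t))"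
definition MM :: "real \<Rightarrow> real \<Rightarrow> real \<Rightarrow> real \<Rightarrow> real \<Rightarrow> real" where
  "MM q u v C t = q*(1/(1-(v-t)) - 1/(1-(u+t))) * (C + RR q (u+t) + RR q (v-t))
     + WW q (u+t)/(1-(u+t)) - WW q (v-t)/(1-(v-t))"

lemma pm1: "0 < (x::real) \<Longrightarrow> x powr (q-1) = x powr q / x"
  by (simp add: powr_diff)
lemma pm2: "0 < (x::real) \<Longrightarrow> x powr (q-2) = x powr q / x^2"
  by (simp add: powr_diff)

lemma d_RR: assumes "0<t" "t<1" shows "(RR q has_real_derivative WW q t / (1-t)) (at t)"
  unfolding RR_def[abs_def]
  using assms by (auto intro!: derivative_eq_intros simp: WW_def pm1 field_simps power2_eq_square)

lemma d_WW: assumes "0<t" "t<1" shows "(WW q has_real_derivative WW q t * LL q t) (at t)"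
  unfolding WW_def[abs_def]
  using assms by (auto intro!: derivative_eq_intros simp: LL_def pm1 pm2 field_simps power2_eq_square)

lemma d_LL: assumes "0<t" "t<1" shows "(LL q has_real_derivative (1-q)/t^2 + q/(1-t)^2) (at t)"
  unfolding LL_def[abs_def]
  using assms by (auto intro!: derivative_eq_intros simp: field_simps power2_eq_square)

lemma WW_pos: "0<q \<Longrightarrow> 0<t \<Longrightarrow> t<1 \<Longrightarrow> WW q t > 0"
  unfolding WW_def by simp

lemma WL_mono: assumes q: "0<q" "q<1" and ab: "0<a" "a<b" "b<1"
  shows "WW q a * LL q a < WW q b * LL q b"
proof (rule DERIV_pos_imp_increasing[OF ab(2)])
  fix x assume x: "a \<le> x" "x \<le> b"
  hence x0: "0<x" "x<1" using ab by auto
  have "((\<lambda>t. WW q t * LL q t) has_real_derivative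
      (WW q x * LL q x) * LL q x + WW q x * ((1-q)/x^2 + q/(1-x)^2)) (at x)"
    by (rule DERIV_cong[OF DERIV_mult[OF d_WW[OF x0] d_LL[OF x0]]]) (simp add: algebra_simps)
  moreover have "(WW q x * LL q x) * LL q x + WW q x * ((1-q)/x^2 + q/(1-x)^2) > 0"
  proof -
    have "WW q x > 0" using WW_pos q x0 by auto
    moreover have "(1-q)/x^2 + q/(1-x)^2 > 0" using q x0 by (simp add: add_pos_pos)
    ultimately have "WW q x * ((1-q)/x^2 + q/(1-x)^2) > 0" by simp
    moreover have "(WW q x * LL q x) * LL q x \<ge> 0" using \<open>WW q x > 0\<close>
      by (metis mult.assoc mult_nonneg_nonneg less_imp_le zero_le_square)
    ultimately show ?thesis by linarith
  qed
  ultimately show "\<exists>y. ((\<lambda>t. WW q t * LL q t) has_real_derivative y) (at x) \<and> 0 < y" by blast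
qed

lemma WW_convex: assumes q: "0<q" "q<1" and ab: "0<a" "a<b" "b<1"
  shows "WW q b - WW q a < (b-a) * (WW q b * LL q b)"
proof -
  have h: "\<And>x. a \<le> x \<Longrightarrow> x \<le> b \<Longrightarrow> (WW q has_real_derivative WW q x * LL q x) (at x)"
    using ab by (auto intro!: d_WW)
  from MVT2[OF ab(2) h] obtain z where z: "a<z" "z<b" "WW q b - WW q a = (b-a) * (WW q z * LL q z)"
    by blast
  have "WW q z * LL q z < WW q b * LL q b" using WL_mono[OF q _ z(2) ab(3)] z ab by auto
  thus ?thesis using z ab by simp
qed

lemma d_RRc: "(f has_real_derivative f') (at x) \<Longrightarrow> 0 < f x \<Longrightarrow> f x < 1 \<Longrightarrow>
   ((\<lambda>x. RR q (f x)) has_real_derivative WW q (f x)/(1 - f x) * f') (at x)"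
  by (rule DERIV_chain2[OF d_RR])

lemma d_WWc: "(f has_real_derivative f') (at x) \<Longrightarrow> 0 < f x \<Longrightarrow> f x < 1 \<Longrightarrow>
   ((\<lambda>x. WW q (f x)) has_real_derivative WW q (f x) * LL q (f x) * f') (at x)"
  by (rule DERIV_chain2[OF d_WW])

lemma alg1: "(x::real) \<noteq> 0 \<Longrightarrow> y \<noteq> 0 \<Longrightarrow>
  (q * (PX/x) * (0-(0+1)) * PY + q*(PY/y)*(0-(0-1))*PX) * B + (0 + W1/x*(0+1) + W2/y*(0-1))*(PX*PY)
  = PX*PY*(q*(1/y - 1/x)*B + W1/x - W2/y)"
  by (simp add: field_simps)

lemma alg2: "(c::real) \<noteq> 0 \<Longrightarrow>
  (0 * (1 / c - 1 / c) + ((0 * c - 1 * (0 - (0 - 1))) / (c * c) - (0 * c - 1 * (0 - (0 + 1))) / (c * c)) * q) * (C + R + R) +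
  (0 + W / c * (0 + 1) + W / c * (0 - 1)) * (q * (1 / c - 1 / c)) +
  (W * L * (0 + 1) * c - W * (0 - (0 + 1))) / (c * c) -
  (W * L * (0 - 1) * c - W * (0 - (0 - 1))) / (c * c) =
  - 2 * q / c^2 * (C + 2 * R) + 2 * (W * L * c + W) / c^2"
  by (simp add: field_simps power2_eq_square)

lemma alg3: "(x::real) \<noteq> 0 \<Longrightarrow> y \<noteq> 0 \<Longrightarrow>
  x*y*(q*(1/x - 1/y)*S + Wb/y - Wa/x) = q*(y - x)*S + Wb*x - Wa*y"
  by (simp add: field_simps)

lemma d_GG: assumes "0<u+t" "u+t<1" "0<v-t" "v-t<1"
  shows "(GG q u v C has_real_derivative (1-(u+t)) powr q * (1-(v-t)) powr q * MM q u v C t) (at t)"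
proof -
  have r1: "((\<lambda>z. RR q (u + z)) has_real_derivative WW q (u+t)/(1-(u+t)) * 1) (at t)"
    using assms by (intro d_RRc) (auto intro!: derivative_eq_intros)
  have r2: "((\<lambda>z. RR q (v - z)) has_real_derivative WW q (v-t)/(1-(v-t)) * (-1)) (at t)"
    using assms by (intro d_RRc) (auto intro!: derivative_eq_intros)
  have X: "0 < 1-(u+t)" "0 < 1-(v-t)" using assms by auto
  show ?thesis
  unfolding GG_def[abs_def]
  apply (rule DERIV_cong)
   apply (use assms in \<open>auto intro!: derivative_eq_intros d_RRc\<close>)[1]
  apply (simp only: pm1[OF X(1)] pm1[OF X(2)] MM_def)
  apply (rule alg1) using X by auto
qed

lemma d_MM0: assumes "0<b" "b<1"
  shows "(MM q b b C has_real_derivative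
     -2*q/(1-b)^2 * (C + 2*RR q b) + 2*(WW q b * LL q b * (1-b) + WW q b)/(1-b)^2) (at 0)"
proof -
  have r1: "((\<lambda>z. RR q (b + z)) has_real_derivative WW q (b+0)/(1-(b+0)) * 1) (at 0)"
    using assms by (intro d_RRc) (auto intro!: derivative_eq_intros)
  have r2: "((\<lambda>z. RR q (b - z)) has_real_derivative WW q (b-0)/(1-(b-0)) * (-1)) (at 0)"
    using assms by (intro d_RRc) (auto intro!: derivative_eq_intros)
  have w1: "((\<lambda>z. WW q (b + z)) has_real_derivative WW q (b+0) * LL q (b+0) * 1) (at 0)"
    using assms by (intro d_WWc) (auto intro!: derivative_eq_intros)
  have w2: "((\<lambda>z. WW q (b - z)) has_real_derivative WW q (b-0) * LL q (b-0) * (-1)) (at 0)"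
    using assms by (intro d_WWc) (auto intro!: derivative_eq_intros)
  have X: "1-b \<noteq> 0" using assms by auto
  show ?thesis
  unfolding MM_def[abs_def]
  apply (rule DERIV_cong)
   apply (use assms in \<open>auto intro!: derivative_eq_intros d_RRc d_WWc\<close>)[1]
  using alg2[of "1-b" q C "RR q b" "WW q b" "LL q b"] X by simp
qed

lemma not_max:
  fixes G A M :: "real \<Rightarrow> real"
  assumes d: "d>0" and dG: "\<And>t. \<bar>t\<bar> < d \<Longrightarrow> (G has_real_derivative A t * M t) (at t)"
    and A: "\<And>t. \<bar>t\<bar> < d \<Longrightarrow> A t > 0" and M0: "M 0 = 0"
    and dM: "(M has_real_derivative c) (at 0)" and c: "c > 0"
  shows "\<exists>t. 0 < t \<and> t < d \<and> G 0 < G t"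
proof -
  obtain d1 where d1: "d1>0" "\<And>h. h>0 \<Longrightarrow> h < d1 \<Longrightarrow> M 0 < M (0+h)"
    using DERIV_pos_inc_right[OF dM c] by blast
  define t where "t = min d d1 / 2"
  have t: "0<t" "t<d" "t<d1" using d d1 unfolding t_def by auto
  have h: "\<And>x. 0 \<le> x \<Longrightarrow> x \<le> t \<Longrightarrow> (G has_real_derivative A x * M x) (at x)"
    using t by (intro dG) auto
  from MVT2[OF t(1) h] obtain z where z: "0<z" "z<t" "G t - G 0 = (t-0) * (A z * M z)" by blast
  have "M z > 0" using d1(2)[of z] z t M0 by auto
  moreover have "A z > 0" using A[of z] z t by auto
  ultimately have "G t - G 0 > 0" using z t by simp
  thus ?thesis using t by auto
qed

lemma P_factor: assumes "\<forall>l<k. 0 < z l \<and> z l < 1"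
  shows "P k q z = (\<Prod>l<k. (1 - z l) powr q) * (\<Sum>l<k. RR q (z l))"
  unfolding P_def sum_distrib_left
proof (rule sum.cong[OF refl])
  fix i assume i: "i \<in> {..<k}"
  have "(\<Prod>l<k. (1 - z l) powr q) = (1 - z i) powr q * (\<Prod>l\<in>{..<k}-{i}. (1 - z l) powr q)"
    using i by (simp add: prod.remove)
  moreover have "(1 - z i) powr q > 0" using assms i by auto
  ultimately show "z i powr q * (\<Prod>j\<in>{..<k} - {i}. (1 - z j) powr q) = (\<Prod>l<k. (1 - z l) powr q) * RR q (z i)"
    unfolding RR_def by (simp add: field_simps)
qed

lemma split2_prod: "i<(k::nat) \<Longrightarrow> j<k \<Longrightarrow> i\<noteq>j \<Longrightarrow>
  (\<Prod>l<k. f l) = f i * f j * (\<Prod>l\<in>{..<k}-{i,j}. (f l::real))"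
proof -
  assume a: "i<k" "j<k" "i\<noteq>j"
  have "(\<Prod>l<k. f l) = f i * (\<Prod>l\<in>{..<k}-{i}. f l)" using a by (intro prod.remove) auto
  also have "(\<Prod>l\<in>{..<k}-{i}. f l) = f j * (\<Prod>l\<in>{..<k}-{i}-{j}. f l)"
    using a by (intro prod.remove) auto
  also have "{..<k}-{i}-{j} = {..<k}-{i,j}" by auto
  finally show ?thesis by simp
qed

lemma split2_sum: "i<(k::nat) \<Longrightarrow> j<k \<Longrightarrow> i\<noteq>j \<Longrightarrow>
  (\<Sum>l<k. f l) = f i + f j + (\<Sum>l\<in>{..<k}-{i,j}. (f l::real))"
proof -
  assume a: "i<k" "j<k" "i\<noteq>j"
  have "(\<Sum>l<k. f l) = f i + (\<Sum>l\<in>{..<k}-{i}. f l)" using a by (intro sum.remove) auto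
  also have "(\<Sum>l\<in>{..<k}-{i}. f l) = f j + (\<Sum>l\<in>{..<k}-{i}-{j}. f l)"
    using a by (intro sum.remove) auto
  also have "{..<k}-{i}-{j} = {..<k}-{i,j}" by auto
  finally show ?thesis by simp
qed

lemma perturb:
  fixes y :: "nat \<Rightarrow> real"
  assumes y: "y \<in> simplex k" and pos: "\<forall>l<k. 0 < y l \<and> y l < 1" and ij: "i<k" "j<k" "i\<noteq>j"
    and t: "0 < y i + t" "y i + t < 1" "0 < y j - t" "y j - t < 1"
  shows "y(i := y i + t, j := y j - t) \<in> simplex k \<and>
    P k q (y(i := y i + t, j := y j - t)) = (\<Prod>l\<in>{..<k}-{i,j}. (1 - y l) powr q) *
       GG q (y i) (y j) (\<Sum>l\<in>{..<k}-{i,j}. RR q (y l)) t"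
proof -
  define z where "z = y(i := y i + t, j := y j - t)"
  have zi: "z i = y i + t" and zj: "z j = y j - t" using ij unfolding z_def by auto
  have zl: "\<And>l. l \<in> {..<k}-{i,j} \<Longrightarrow> z l = y l" unfolding z_def by auto
  have zpos: "\<forall>l<k. 0 < z l \<and> z l < 1"
    using pos t zi zj zl by (metis Diff_iff empty_iff insert_iff lessThan_iff)
  have "(\<Sum>l<k. z l) = z i + z j + (\<Sum>l\<in>{..<k}-{i,j}. z l)" by (rule split2_sum[OF ij])
  also have "(\<Sum>l\<in>{..<k}-{i,j}. z l) = (\<Sum>l\<in>{..<k}-{i,j}. y l)" using zl by (rule sum.cong[OF refl])
  also have "z i + z j + (\<Sum>l\<in>{..<k}-{i,j}. y l) = (\<Sum>l<k. y l)"
    using split2_sum[OF ij, of y] zi zj by simp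
  finally have "(\<Sum>l<k. z l) = 1" using y unfolding simplex_def by simp
  hence zs: "z \<in> simplex k" using zpos unfolding simplex_def by auto
  have "P k q z = (\<Prod>l<k. (1 - z l) powr q) * (\<Sum>l<k. RR q (z l))" by (rule P_factor[OF zpos])
  also have "(\<Prod>l<k. (1 - z l) powr q) = (1 - z i) powr q * (1 - z j) powr q * (\<Prod>l\<in>{..<k}-{i,j}. (1 - y l) powr q)"
    using split2_prod[OF ij, of "\<lambda>l. (1 - z l) powr q"] zl by simp
  also have "(\<Sum>l<k. RR q (z l)) = RR q (z i) + RR q (z j) + (\<Sum>l\<in>{..<k}-{i,j}. RR q (y l))"
    using split2_sum[OF ij, of "\<lambda>l. RR q (z l)"] zl by simp
  finally show ?thesis unfolding z_def[symmetric] GG_def using zs zi zj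
    by (simp add: algebra_simps)
qed

theorem lemma4p4:
  fixes k :: nat and q a b :: real and y :: "nat \<Rightarrow> real"
  assumes "k \<ge> 2"
    and "1/2 < q" and "q < 1"
    and "y \<in> simplex k"
    and "\<forall>i<k. y i > 0"
    and "\<forall>z\<in>simplex k. P k q z \<le> P k q y"
    and "\<exists>i<k. y i \<noteq> 1 / real k"
    and "a < 1 - q" and "1 - q < b"
    and "\<forall>i<k. y i = a \<or> y i = b"
    and "\<exists>i<k. y i = a" and "\<exists>i<k. y i = b"
  shows "card {i. i < k \<and> y i = b} = 1"
proof (rule ccontr)
  assume ne: "card {i. i < k \<and> y i = b} \<noteq> 1"
  have y: "y \<in> simplex k" by fact
  have ymax: "\<And>z. z \<in> simplex k \<Longrightarrow> P k q z \<le> P k q y" using assms(6) by blast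
  have q0: "0 < q" "q < 1" using assms(2,3) by auto
  obtain i0 where i0: "i0<k" "y i0 = a" using assms(11) by blast
  obtain i1 where i1: "i1<k" "y i1 = b" using assms(12) by blast
  have ab: "a < b" using assms(8,9) by simp
  define Bs where "Bs = {i. i < k \<and> y i = b}"
  have "i1 \<in> Bs" using i1 unfolding Bs_def by auto
  moreover have "card Bs \<noteq> 1" using ne unfolding Bs_def .
  hence "Bs \<noteq> {i1}" by (intro notI) simp
  ultimately obtain i2 where "i2 \<in> Bs" "i2 \<noteq> i1" by blast
  hence i2: "i2<k" "y i2 = b" "i2 \<noteq> i1" unfolding Bs_def by auto
  have a0: "0 < a" using assms(5) i0 by auto
  have i01: "i0 \<noteq> i1" using ab i0 i1 by auto
  have ysum: "(\<Sum>l<k. y l) = 1" using y unfolding simplex_def by auto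
  have ypos: "\<forall>l<k. 0 < y l \<and> y l < 1"
  proof (intro allI impI conjI)
    fix l assume l: "l<k"
    show "0 < y l" using assms(5) l by auto
    define m where "m = (if l = i0 then i1 else i0)"
    have m: "m<k" "m\<noteq>l" using i0 i1 i01 unfolding m_def by auto
    have "(\<Sum>l<k. y l) = y l + y m + (\<Sum>l\<in>{..<k}-{l,m}. y l)" by (rule split2_sum[OF l m(1) m(2)[symmetric]])
    moreover have "(\<Sum>l\<in>{..<k}-{l,m}. y l) \<ge> 0" using assms(5) by (intro sum_nonneg) auto
    moreover have "y m > 0" using assms(5) m by auto
    ultimately show "y l < 1" using ysum by linarith
  qed
  have b1: "b < 1" using ypos i1 by auto
  define S where "S = (\<Sum>l<k. RR q (y l))"
  define C1 where "C1 = (\<Sum>l\<in>{..<k}-{i1,i0}. RR q (y l))"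
  define K1 where "K1 = (\<Prod>l\<in>{..<k}-{i1,i0}. (1 - y l) powr q)"
  have K1: "K1 > 0" unfolding K1_def using ypos by (intro prod_pos) auto
  have S1: "S = RR q b + RR q a + C1" unfolding S_def C1_def
    using split2_sum[OF i1(1) i0(1) i01[symmetric], of "\<lambda>l. RR q (y l)"] i0 i1 by simp
  define d1 where "d1 = min a (1-b)"
  have d1: "d1 > 0" using a0 b1 unfolding d1_def by auto
  have Py1: "P k q y = K1 * GG q b a C1 0"
  proof -
    have "y(i1 := y i1 + 0, i0 := y i0 - 0) = y" by auto
    thus ?thesis using perturb[OF y ypos i1(1) i0(1) i01[symmetric], of 0 q] ypos i0 i1
      unfolding K1_def C1_def by auto
  qed
  have le1: "\<forall>t. \<bar>0 - t\<bar> < d1 \<longrightarrow> GG q b a C1 t \<le> GG q b a C1 0"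
  proof (intro allI impI)
    fix t assume t: "\<bar>0 - t\<bar> < d1"
    have tt: "0 < y i1 + t" "y i1 + t < 1" "0 < y i0 - t" "y i0 - t < 1"
      using t ab i0 i1 unfolding d1_def by auto
    from perturb[OF y ypos i1(1) i0(1) i01[symmetric] tt, of q]
    have zs: "y(i1 := y i1 + t, i0 := y i0 - t) \<in> simplex k"
      and Pz: "P k q (y(i1 := y i1 + t, i0 := y i0 - t)) = K1 * GG q (y i1) (y i0) C1 t"
      unfolding K1_def C1_def by auto
    have "K1 * GG q b a C1 t \<le> K1 * GG q b a C1 0"
      using ymax[OF zs] Pz Py1 i0 i1 by simp
    thus "GG q b a C1 t \<le> GG q b a C1 0" using K1 by simp
  qed
  have dG1: "(GG q b a C1 has_real_derivative (1-(b+0)) powr q * (1-(a-0)) powr q * MM q b a C1 0) (at 0)"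
    using a0 ab b1 by (intro d_GG) auto
  have "(1-(b+0)) powr q * (1-(a-0)) powr q * MM q b a C1 0 = 0"
    by (rule DERIV_local_max[OF dG1 d1 le1])
  moreover have "(1-(b+0)) powr q * (1-(a-0)) powr q > 0" using ab b1 by simp
  ultimately have M1: "MM q b a C1 0 = 0" using ab b1 by simp
  have foc: "q*(1/(1-a) - 1/(1-b))*S + WW q b/(1-b) - WW q a/(1-a) = 0"
    using M1 unfolding MM_def S1 by (simp add: algebra_simps)
  define C2 where "C2 = (\<Sum>l\<in>{..<k}-{i1,i2}. RR q (y l))"
  define K2 where "K2 = (\<Prod>l\<in>{..<k}-{i1,i2}. (1 - y l) powr q)"
  have K2: "K2 > 0" unfolding K2_def using ypos by (intro prod_pos) auto
  have S2: "S = RR q b + RR q b + C2" unfolding S_def C2_def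
    using split2_sum[OF i1(1) i2(1) i2(3)[symmetric], of "\<lambda>l. RR q (y l)"] i2 i1 by simp
  define d2 where "d2 = min b (1-b)"
  have b0: "0 < b" using a0 ab by simp
  have d2: "d2 > 0" using b0 b1 unfolding d2_def by auto
  have Py2: "P k q y = K2 * GG q b b C2 0"
  proof -
    have "y(i1 := y i1 + 0, i2 := y i2 - 0) = y" by auto
    thus ?thesis using perturb[OF y ypos i1(1) i2(1) i2(3)[symmetric], of 0 q] ypos i2 i1
      unfolding K2_def C2_def by auto
  qed
  have "\<exists>t. 0 < t \<and> t < d2 \<and> GG q b b C2 0 < GG q b b C2 t"
  proof (rule not_max[OF d2])
    fix t :: real assume t: "\<bar>t\<bar> < d2"
    show "(GG q b b C2 has_real_derivative (1-(b+t)) powr q * (1-(b-t)) powr q * MM q b b C2 t) (at t)"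
      using t unfolding d2_def by (intro d_GG) auto
    show "(1-(b+t)) powr q * (1-(b-t)) powr q > 0" using t unfolding d2_def by auto
  next
    show "MM q b b C2 0 = 0" unfolding MM_def by simp
  next
    show "(MM q b b C2 has_real_derivative
     -2*q/(1-b)^2 * (C2 + 2*RR q b) + 2*(WW q b * LL q b * (1-b) + WW q b)/(1-b)^2) (at 0)"
      using b0 b1 by (rule d_MM0)
  next
    define X where "X = WW q b * LL q b * (1-b) + WW q b - q*S"
    have e1: "q*(a-b)*S + WW q b*(1-a) - WW q a*(1-b) = 0"
    proof -
      have "(1-a)*(1-b)*(q*(1/(1-a) - 1/(1-b))*S + WW q b/(1-b) - WW q a/(1-a))
         = q*((1-b)-(1-a))*S + WW q b*(1-a) - WW q a*(1-b)"
        by (rule alg3) (use ab b1 in auto)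
      thus ?thesis using foc by simp
    qed
    have e2: "(1-b)*(WW q b - WW q a) < (1-b)*((b-a)*(WW q b * LL q b))"
      using WW_convex[OF q0 a0 ab b1] b1 by (intro mult_strict_left_mono) auto
    have "(b-a)*X = (1-b)*((b-a)*(WW q b * LL q b)) - (1-b)*(WW q b - WW q a)
        + (q*(a-b)*S + WW q b*(1-a) - WW q a*(1-b))"
      unfolding X_def by (simp add: algebra_simps)
    hence "(b-a)*X > 0" using e1 e2 by linarith
    hence X0: "X > 0" using ab by (simp add: zero_less_mult_iff)
    have "-2*q/(1-b)^2 * (C2 + 2*RR q b) + 2*(WW q b * LL q b * (1-b) + WW q b)/(1-b)^2
       = 2*X/(1-b)^2" unfolding X_def S2 using b1 by (simp add: field_simps)
    also have "\<dots> > 0" using X0 b1 by simp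
    finally show "-2*q/(1-b)^2 * (C2 + 2*RR q b) + 2*(WW q b * LL q b * (1-b) + WW q b)/(1-b)^2 > 0" .
  qed
  then obtain t where t: "0 < t" "t < d2" "GG q b b C2 0 < GG q b b C2 t" by blast
  have tt: "0 < y i1 + t" "y i1 + t < 1" "0 < y i2 - t" "y i2 - t < 1"
    using t i1 i2 unfolding d2_def by auto
  from perturb[OF y ypos i1(1) i2(1) i2(3)[symmetric] tt, of q]
  have "y(i1 := y i1 + t, i2 := y i2 - t) \<in> simplex k"
    and "P k q (y(i1 := y i1 + t, i2 := y i2 - t)) = K2 * GG q b b C2 t"
    using i1 i2 unfolding K2_def C2_def by auto
  hence "K2 * GG q b b C2 t \<le> K2 * GG q b b C2 0" using ymax Py2 by metis
  hence "GG q b b C2 t \<le> GG q b b C2 0" using K2 by simp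
  thus False using t by simp
qed

end
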